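(* Let $G$ be a simple connected graph with at least one edge. Then $H(G)=\bigcap_{\mathcal{F}\in\mathscr{F}}G(A_\mathcal{F})$, where all graphs $G(A_\mathcal{F})$ are regarded as graphs on the common vertex set $E(G)$ (the vertex corresponding to the column of edge $e$ being identified with $e$), and the intersection is taken over all path fixings $\mathcal{F}$ of $G$.
   Context: For distinct $u,v\in V(G)$, $\mathcal{P}_{uv}$ is the set of shortest $(u,v)$-paths in $G$ and $\mathcal{P}$ is the set of all such shortest paths. A path fixing of $G$ is a set $\mathcal{F}\subseteq\mathcal{P}$ with $|\mathcal{F}\cap\mathcal{P}_{uv}|=1$ for all distinct $u,v\in V(G)$; $\mathscr{F}$ is the set of all path fixings. For $\mathcal{F}\in\mathscr{F}$, $A_\mathcal{F}$ is the 0-1 matrix with rows indexed by the paths in $\mathcal{F}$ and columns indexed by $E(G)$, whose $(P,e)$ entry is 1 iff $e\in E(P)$. For a 0-1 matrix $A$ with columns $a_1,\dots,a_n$, $G(A)$ is the graph with one vertex per column, where distinct vertices $i,j$ are adjacent iff $a_i^{T}a_j\geq 1$. An edge $e$ separates distinct $u_1,u_2$ if $e$ lies on every path in $\mathcal{P}_{u_1u_2}$. The auxiliary graph $H(G)$ has vertex set $E(G)$, and distinct $e_1,e_2$ are adjacent in $H(G)$ iff some pair of distinct vertices is separated by both. The intersection of graphs has the intersection of the vertex sets and of the edge sets. *)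

theory Defs
  imports Main
begin

definition simple_graph :: "'a set \<Rightarrow> 'a set set \<Rightarrow> bool" where
  "simple_graph V E \<longleftrightarrow> finite V \<and> (\<forall>e\<in>E. \<exists>u v. u \<in> V \<and> v \<in> V \<and> u \<noteq> v \<and> e = {u, v})"

definition is_path :: "'a set \<Rightarrow> 'a set set \<Rightarrow> 'a list \<Rightarrow> 'a \<Rightarrow> 'a \<Rightarrow> bool" where
  "is_path V E xs u v \<longleftrightarrow> xs \<noteq> [] \<and> hd xs = u \<and> last xs = v \<and> distinct xs \<and> set xs \<subseteq> V
     \<and> (\<forall>i. Suc i < length xs \<longrightarrow> {xs ! i, xs ! Suc i} \<in> E)"

definition connected_graph :: "'a set \<Rightarrow> 'a set set \<Rightarrow> bool" where
  "connected_graph V E \<longleftrightarrow> (\<forall>u\<in>V. \<forall>v\<in>V. \<exists>xs. is_path V E xs u v)"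

text \<open>Edge set of a path (paths are identified with their edge sets, i.e. as subgraphs).\<close>
definition path_edges :: "'a list \<Rightarrow> 'a set set" where
  "path_edges xs = {{xs ! i, xs ! Suc i} | i. Suc i < length xs}"

definition is_shortest_path :: "'a set \<Rightarrow> 'a set set \<Rightarrow> 'a list \<Rightarrow> 'a \<Rightarrow> 'a \<Rightarrow> bool" where
  "is_shortest_path V E xs u v \<longleftrightarrow> is_path V E xs u v
     \<and> (\<forall>ys. is_path V E ys u v \<longrightarrow> length xs \<le> length ys)"

definition shortest_paths :: "'a set \<Rightarrow> 'a set set \<Rightarrow> 'a \<Rightarrow> 'a \<Rightarrow> 'a set set set" where
  "shortest_paths V E u v = path_edges ` {xs. is_shortest_path V E xs u v}"

definition all_shortest_paths :: "'a set \<Rightarrow> 'a set set \<Rightarrow> 'a set set set" where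
  "all_shortest_paths V E = (\<Union>u\<in>V. \<Union>v\<in>V. if u \<noteq> v then shortest_paths V E u v else {})"

definition path_fixings :: "'a set \<Rightarrow> 'a set set \<Rightarrow> 'a set set set set" where
  "path_fixings V E = {F. F \<subseteq> all_shortest_paths V E \<and>
     (\<forall>u\<in>V. \<forall>v\<in>V. u \<noteq> v \<longrightarrow> card (F \<inter> shortest_paths V E u v) = 1)}"

text \<open>The 0-1 matrix \<open>A_F\<close>: rows indexed by the paths in F, columns by E.\<close>
definition path_matrix :: "'a set set set \<Rightarrow> 'a set set \<Rightarrow> 'a set \<Rightarrow> nat" where
  "path_matrix F P e = (if e \<in> P then 1 else 0)"

type_synonym 'v graph = "'v set \<times> 'v set set"

definition col_graph :: "'r set \<Rightarrow> 'c set \<Rightarrow> ('r \<Rightarrow> 'c \<Rightarrow> nat) \<Rightarrow> 'c graph" where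
  "col_graph R C A = (C, {{i, j} | i j. i \<in> C \<and> j \<in> C \<and> i \<noteq> j \<and> (\<Sum>r\<in>R. A r i * A r j) \<ge> 1})"

definition separates :: "'a set \<Rightarrow> 'a set set \<Rightarrow> 'a set \<Rightarrow> 'a \<Rightarrow> 'a \<Rightarrow> bool" where
  "separates V E e u1 u2 \<longleftrightarrow> (\<forall>P\<in>shortest_paths V E u1 u2. e \<in> P)"

definition aux_graph :: "'a set \<Rightarrow> 'a set set \<Rightarrow> 'a set graph" where
  "aux_graph V E = (E, {{e1, e2} | e1 e2. e1 \<in> E \<and> e2 \<in> E \<and> e1 \<noteq> e2 \<and>
      (\<exists>u1\<in>V. \<exists>u2\<in>V. u1 \<noteq> u2 \<and> separates V E e1 u1 u2 \<and> separates V E e2 u1 u2)})"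

definition graph_Inter :: "'v graph set \<Rightarrow> 'v graph" where
  "graph_Inter S = (\<Inter> (fst ` S), \<Inter> (snd ` S))"

end

theory Submission
  imports Defs
begin

lemma path_edges_rev: "path_edges (rev xs) = path_edges xs"
proof -
  have sub: "path_edges (rev ys) \<subseteq> path_edges ys" for ys :: "'b list"
  proof
    fix e assume "e \<in> path_edges (rev ys)"
    then obtain i where i: "Suc i < length ys" "e = {rev ys ! i, rev ys ! Suc i}"
      unfolding path_edges_def by auto
    define j where "j = length ys - Suc (Suc i)"
    have "Suc j < length ys" "rev ys ! i = ys ! Suc j" "rev ys ! Suc i = ys ! j"
      using i by (auto simp: j_def rev_nth Suc_diff_Suc)
    then show "e \<in> path_edges ys" using i unfolding path_edges_def
      by (auto simp: insert_commute)
  qed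
  from sub[of xs] sub[of "rev xs"] show ?thesis by auto
qed

lemma path_edges_sub: "(\<forall>i. Suc i < length xs \<longrightarrow> {xs!i, xs!Suc i} \<in> E) \<longleftrightarrow> path_edges xs \<subseteq> E"
  unfolding path_edges_def by auto

lemma is_path_rev: "is_path V E xs u v \<Longrightarrow> is_path V E (rev xs) v u"
  unfolding is_path_def path_edges_sub
  by (simp add: hd_rev last_rev path_edges_rev)

lemma shortest_rev: "is_shortest_path V E xs u v \<Longrightarrow> is_shortest_path V E (rev xs) v u"
  unfolding is_shortest_path_def using is_path_rev by (metis length_rev rev_rev_ident)

lemma sp_sym: "shortest_paths V E u v = shortest_paths V E v u"
proof -
  have "shortest_paths V E a b \<subseteq> shortest_paths V E b a" for a b
  proof
    fix P assume "P \<in> shortest_paths V E a b"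
    then obtain xs where "is_shortest_path V E xs a b" "P = path_edges xs"
      unfolding shortest_paths_def by auto
    then have "P = path_edges (rev xs)" "rev xs \<in> {xs. is_shortest_path V E xs b a}"
      using path_edges_rev shortest_rev by auto
    then show "P \<in> shortest_paths V E b a" unfolding shortest_paths_def by blast
  qed
  then show ?thesis by blast
qed

definition ends :: "'a set set \<Rightarrow> 'a set" where
  "ends P = {x. \<exists>e\<in>P. x \<in> e \<and> (\<forall>e'\<in>P. x \<in> e' \<longrightarrow> e' = e)}"

lemma pe_mem: "Suc i < length xs \<Longrightarrow> {xs!i, xs!Suc i} \<in> path_edges xs"
  unfolding path_edges_def by blast

lemma pe_cases: "e \<in> path_edges xs \<Longrightarrow> (\<And>i. Suc i < length xs \<Longrightarrow> e = {xs!i, xs!Suc i} \<Longrightarrow> thesis) \<Longrightarrow> thesis"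
  unfolding path_edges_def by blast

lemma hd_in_ends:
  assumes "distinct xs" "length xs \<ge> 2"
  shows "hd xs \<in> ends (path_edges xs)"
proof -
  have hd: "hd xs = xs ! 0" using assms by (intro hd_conv_nth) auto
  have e: "{xs!0, xs!Suc 0} \<in> path_edges xs" using assms by (intro pe_mem) simp
  have "e' = {xs!0, xs!Suc 0}" if ee: "e' \<in> path_edges xs" "xs!0 \<in> e'" for e'
  proof -
    obtain i where i: "Suc i < length xs" "e' = {xs!i, xs!Suc i}"
      using ee(1) by (rule pe_cases)
    have dj: "xs!0 = xs!i \<or> xs!0 = xs!Suc i" using ee(2) i(2) by simp
    have l0: "0 < length xs" "i < length xs" by (rule less_trans[OF zero_less_Suc i(1)], rule Suc_lessD[OF i(1)])
    have n1: "(xs!0 = xs!Suc i) = (0 = Suc i)" by (rule nth_eq_iff_index_eq[OF assms(1) l0(1) i(1)])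
    have n2: "(xs!0 = xs!i) = (0 = i)" by (rule nth_eq_iff_index_eq[OF assms(1) l0(1) l0(2)])
    have "xs!0 \<noteq> xs!Suc i" using n1 by simp
    then have "xs!0 = xs!i" using dj by blast
    then have "i = 0" using n2 by blast
    then show ?thesis using i by simp
  qed
  then have "\<forall>e'\<in>path_edges xs. xs!0 \<in> e' \<longrightarrow> e' = {xs!0, xs!Suc 0}" by blast
  then show ?thesis unfolding ends_def hd mem_Collect_eq using e by blast
qed

lemma ends_sub:
  assumes "distinct xs" "x \<in> ends (path_edges xs)"
  shows "x = hd xs \<or> x = last xs"
proof -
  obtain e where e: "e \<in> path_edges xs" "x \<in> e" "\<forall>e'\<in>path_edges xs. x \<in> e' \<longrightarrow> e' = e"
    using assms(2) unfolding ends_def by auto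
  obtain i where i: "Suc i < length xs" "e = {xs!i, xs!Suc i}"
    using e(1) by (rule pe_cases)
  have "x = xs!i \<or> x = xs!Suc i" using e(2) i(2) by simp
  then obtain k where k: "k < length xs" "x = xs ! k" using i(1) Suc_lessD by blast
  show ?thesis
  proof (rule ccontr)
    assume nh: "\<not> ?thesis"
    have ne: "xs \<noteq> []" using k(1) by auto
    have "k \<noteq> 0"
    proof
      assume "k = 0" then have "x = hd xs" using k(2) hd_conv_nth[OF ne] by simp
      then show False using nh by simp
    qed
    moreover have "k \<noteq> length xs - 1"
    proof
      assume "k = length xs - 1" then have "x = last xs" using k(2) last_conv_nth[OF ne] by simp
      then show False using nh by simp
    qed
    ultimately have k1: "0 < k" "Suc k < length xs" using k by auto
    have kk: "Suc (k-1) = k" using k1 by simp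
    have e1: "{xs!(k-1), xs!k} \<in> path_edges xs" using pe_mem[of "k-1" xs] k1 kk by simp
    have e2: "{xs!k, xs!Suc k} \<in> path_edges xs" using pe_mem[of k xs] k1 by simp
    have q1: "{xs!(k-1), xs!k} = e" using e(3) e1 k(2) by simp
    have q2: "{xs!k, xs!Suc k} = e" using e(3) e2 k(2) by simp
    have "xs!(k-1) \<in> {xs!k, xs!Suc k}" using q1 q2 by (metis insertI1)
    then have "xs!(k-1) = xs!k \<or> xs!(k-1) = xs!Suc k" by simp
    moreover have "xs!(k-1) \<noteq> xs!k" using nth_eq_iff_index_eq[OF assms(1), of "k-1" k] k1 by simp
    moreover have "xs!(k-1) \<noteq> xs!Suc k" using nth_eq_iff_index_eq[OF assms(1), of "k-1" "Suc k"] k1 by simp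
    ultimately show False by blast
  qed
qed

lemma ends_path:
  assumes "distinct xs" "length xs \<ge> 2"
  shows "ends (path_edges xs) = {hd xs, last xs}"
proof -
  have "hd (rev xs) \<in> ends (path_edges (rev xs))" using hd_in_ends[of "rev xs"] assms by simp
  then have "last xs \<in> ends (path_edges xs)" by (simp add: path_edges_rev hd_rev)
  then show ?thesis using hd_in_ends[OF assms] ends_sub[OF assms(1)] by auto
qed

lemma sp_ends:
  assumes "u \<noteq> v" "P \<in> shortest_paths V E u v"
  shows "ends P = {u, v}"
proof -
  obtain xs where xs: "is_path V E xs u v" "P = path_edges xs"
    using assms(2) unfolding shortest_paths_def is_shortest_path_def by auto
  have d: "distinct xs" "xs \<noteq> []" "hd xs = u" "last xs = v" using xs(1) unfolding is_path_def by auto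
  have "length xs \<ge> 2"
  proof (rule ccontr)
    assume "\<not> ?thesis"
    moreover have "length xs \<noteq> 0" using d(2) by simp
    ultimately have "length xs = 1" by linarith
    then have "hd xs = last xs" using d(2) by (simp add: hd_conv_nth last_conv_nth)
    then show False using d assms(1) by simp
  qed
  then show ?thesis using ends_path[OF d(1)] d xs(2) by simp
qed

lemma fixing_exists:
  assumes Q: "\<And>u v. u\<in>V \<Longrightarrow> v\<in>V \<Longrightarrow> u\<noteq>v \<Longrightarrow>
     Q u v \<subseteq> shortest_paths V E u v \<and> Q u v \<noteq> {} \<and> Q u v = Q v u"
  shows "\<exists>F\<in>path_fixings V E. \<forall>u\<in>V. \<forall>v\<in>V. u\<noteq>v \<longrightarrow> F \<inter> shortest_paths V E u v \<subseteq> Q u v"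
proof -
  define pick where "pick s = (SOME P. \<exists>u\<in>V. \<exists>v\<in>V. u\<noteq>v \<and> s = {u,v} \<and> P \<in> Q u v)" for s
  have pick: "pick {u,v} \<in> Q u v" if "u\<in>V" "v\<in>V" "u\<noteq>v" for u v
  proof -
    have "\<exists>P. \<exists>a\<in>V. \<exists>b\<in>V. a\<noteq>b \<and> {u,v} = {a,b} \<and> P \<in> Q a b" using Q[OF that] that by blast
    from someI_ex[OF this] have "\<exists>a\<in>V. \<exists>b\<in>V. a\<noteq>b \<and> {u,v}={a,b} \<and> pick {u,v} \<in> Q a b"
      unfolding pick_def .
    then obtain a b where ab: "a\<in>V" "b\<in>V" "a\<noteq>b" "{u,v}={a,b}" "pick {u,v} \<in> Q a b" by blast
    from ab(4) have "(a=u \<and> b=v) \<or> (a=v \<and> b=u)" by (auto simp: doubleton_eq_iff)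
    then show ?thesis using ab Q[OF that] by auto
  qed
  define F where "F = {pick {u,v} | u v. u\<in>V \<and> v\<in>V \<and> u\<noteq>v}"
  have inter: "F \<inter> shortest_paths V E u v = {pick {u,v}}" if uv: "u\<in>V" "v\<in>V" "u\<noteq>v" for u v
  proof
    show "{pick {u,v}} \<subseteq> F \<inter> shortest_paths V E u v" using pick[OF uv] Q[OF uv] uv
      unfolding F_def by blast
    show "F \<inter> shortest_paths V E u v \<subseteq> {pick{u,v}}"
    proof
      fix P assume P: "P \<in> F \<inter> shortest_paths V E u v"
      then obtain a b where ab: "a\<in>V" "b\<in>V" "a\<noteq>b" "P = pick{a,b}" unfolding F_def by blast
      then have "P \<in> shortest_paths V E a b" using pick Q by blast
      then have "{a,b} = {u,v}" using sp_ends[OF ab(3)] sp_ends[OF uv(3)] P by blast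
      then show "P \<in> {pick{u,v}}" using ab by simp
    qed
  qed
  have "F \<subseteq> all_shortest_paths V E"
  proof
    fix P assume "P \<in> F"
    then obtain a b where ab: "a\<in>V" "b\<in>V" "a\<noteq>b" "P = pick{a,b}" unfolding F_def by blast
    then have "P \<in> shortest_paths V E a b" using pick Q by blast
    then show "P \<in> all_shortest_paths V E" unfolding all_shortest_paths_def using ab by auto
  qed
  then have "F \<in> path_fixings V E" unfolding path_fixings_def using inter by auto
  then show ?thesis using inter pick by (metis empty_subsetI insert_subsetI)
qed

lemma sp_nonempty:
  assumes "connected_graph V E" "u\<in>V" "v\<in>V"
  shows "shortest_paths V E u v \<noteq> {}"
proof -
  define n where "n = (LEAST n. \<exists>xs. is_path V E xs u v \<and> length xs = n)"
  have ex: "\<exists>n xs. is_path V E xs u v \<and> length xs = n"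
    using assms unfolding connected_graph_def by blast
  obtain xs where xs: "is_path V E xs u v" "length xs = n"
    using LeastI_ex[OF ex] unfolding n_def by blast
  have "length xs \<le> length ys" if "is_path V E ys u v" for ys
    using xs(2) unfolding n_def using that by (auto intro: Least_le)
  then have "is_shortest_path V E xs u v" using xs unfolding is_shortest_path_def by blast
  then show ?thesis unfolding shortest_paths_def by blast
qed

lemma sum_ge1_iff:
  assumes "finite F"
  shows "(1 \<le> (\<Sum>r\<in>F. path_matrix F r i * path_matrix F r j)) \<longleftrightarrow> (\<exists>r\<in>F. i\<in>r \<and> j\<in>r)"
proof -
  have "(1 \<le> (\<Sum>r\<in>F. path_matrix F r i * path_matrix F r j)) \<longleftrightarrow>
        \<not> ((\<Sum>r\<in>F. path_matrix F r i * path_matrix F r j) = 0)" by linarith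
  also have "\<dots> \<longleftrightarrow> (\<exists>r\<in>F. i\<in>r \<and> j\<in>r)" using assms
    by (auto simp: sum_eq_0_iff path_matrix_def)
  finally show ?thesis .
qed

lemma asp_cases:
  assumes "P \<in> all_shortest_paths V E"
  obtains u v where "u\<in>V" "v\<in>V" "u\<noteq>v" "P \<in> shortest_paths V E u v"
proof -
  from assms obtain u v where uv: "u\<in>V" "v\<in>V" "P \<in> (if u \<noteq> v then shortest_paths V E u v else {})"
    unfolding all_shortest_paths_def by blast
  show ?thesis
  proof (cases "u = v")
    case True then show ?thesis using uv by simp
  next
    case False then show ?thesis using uv that by simp
  qed
qed

theorem proposition5:
  fixes V :: "'a set" and E :: "'a set set"
  assumes "simple_graph V E" and "connected_graph V E" and "E \<noteq> {}"
  shows "aux_graph V E =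
    graph_Inter ((\<lambda>F. col_graph F E (path_matrix F)) ` path_fixings V E)"
proof -
  let ?SP = "shortest_paths V E"
  have finV: "finite V" using assms(1) unfolding simple_graph_def by auto
  have "E \<subseteq> Pow V" using assms(1) unfolding simple_graph_def by auto
  then have finE: "finite E" using finV finite_subset by blast
  have asp: "all_shortest_paths V E \<subseteq> Pow E"
  proof
    fix P assume "P \<in> all_shortest_paths V E"
    then obtain u v where "P \<in> ?SP u v" by (rule asp_cases)
    then obtain xs where "is_path V E xs u v" "P = path_edges xs"
      unfolding shortest_paths_def is_shortest_path_def by auto
    then show "P \<in> Pow E" unfolding is_path_def path_edges_sub by auto
  qed
  have finF: "finite F" if "F \<in> path_fixings V E" for F
    using that asp finE unfolding path_fixings_def
    by (auto intro: finite_subset[of F "Pow E"])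
  have colsnd: "snd (col_graph F E (path_matrix F)) =
      {{i,j}|i j. i\<in>E \<and> j\<in>E \<and> i\<noteq>j \<and> (\<exists>P\<in>F. i\<in>P \<and> j\<in>P)}"
    if "F \<in> path_fixings V E" for F
    by (simp only: col_graph_def snd_conv sum_ge1_iff[OF finF[OF that]])
  have "\<exists>F\<in>path_fixings V E. \<forall>u\<in>V. \<forall>v\<in>V. u\<noteq>v \<longrightarrow> F \<inter> ?SP u v \<subseteq> ?SP u v"
  proof (rule fixing_exists[of V "\<lambda>u v. shortest_paths V E u v" E])
    fix u v assume uv: "u\<in>V" "v\<in>V" "u\<noteq>v"
    show "?SP u v \<subseteq> ?SP u v \<and> ?SP u v \<noteq> {} \<and> ?SP u v = ?SP v u"
      by (intro conjI subset_refl sp_nonempty[OF assms(2) uv(1,2)] sp_sym)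
  qed
  then obtain F0 where F0: "F0 \<in> path_fixings V E" by blast
  let ?S = "(\<lambda>F. col_graph F E (path_matrix F)) ` path_fixings V E"
  have fstS: "\<Inter> (fst ` ?S) = E" using F0 unfolding col_graph_def by auto
  have sndS: "\<Inter> (snd ` ?S) = snd (aux_graph V E)"
  proof
    show "snd (aux_graph V E) \<subseteq> \<Inter> (snd ` ?S)"
    proof
      fix x assume "x \<in> snd (aux_graph V E)"
      then obtain e1 e2 u1 u2 where x: "x = {e1,e2}" "e1\<in>E" "e2\<in>E" "e1\<noteq>e2" "u1\<in>V" "u2\<in>V"
        "u1\<noteq>u2" "separates V E e1 u1 u2" "separates V E e2 u1 u2"
        unfolding aux_graph_def by auto
      show "x \<in> \<Inter> (snd ` ?S)"
      proof (rule InterI)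
        fix y assume "y \<in> snd ` ?S"
        then obtain F where F: "F \<in> path_fixings V E" "y = snd (col_graph F E (path_matrix F))" by auto
        have "card (F \<inter> ?SP u1 u2) = 1" using F(1) x(5-7) unfolding path_fixings_def by blast
        then obtain P where "P \<in> F" "P \<in> ?SP u1 u2" by (metis card_1_singletonE insertI1 IntE)
        then have "e1 \<in> P" "e2 \<in> P" using x unfolding separates_def by auto
        then show "x \<in> y" using F colsnd[OF F(1)] x \<open>P \<in> F\<close> by blast
      qed
    qed
  next
    show "\<Inter> (snd ` ?S) \<subseteq> snd (aux_graph V E)"
    proof
      fix x assume xin: "x \<in> \<Inter> (snd ` ?S)"
      have "snd (col_graph F0 E (path_matrix F0)) \<in> snd ` ?S" using F0 by (intro imageI)
      with xin have "x \<in> snd (col_graph F0 E (path_matrix F0))" by (rule InterD)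
      then have "x \<in> {{i,j}|i j. i\<in>E \<and> j\<in>E \<and> i\<noteq>j \<and> (\<exists>P\<in>F0. i\<in>P \<and> j\<in>P)}"
        by (simp only: colsnd[OF F0])
      then obtain e1 e2 where x: "x = {e1,e2}" "e1\<in>E" "e2\<in>E" "e1\<noteq>e2"
        by blast
      show "x \<in> snd (aux_graph V E)"
      proof (rule ccontr)
        assume nx: "x \<notin> snd (aux_graph V E)"
        have nsep: "\<not> (separates V E e1 u v \<and> separates V E e2 u v)"
          if "u\<in>V" "v\<in>V" "u\<noteq>v" for u v
        proof
          assume sep: "separates V E e1 u v \<and> separates V E e2 u v"
          have "x \<in> snd (aux_graph V E)" unfolding aux_graph_def snd_conv using x that sep by blast
          then show False using nx by blast
        qed
        define Q where "Q u v = {P\<in>?SP u v. \<not> (e1\<in>P \<and> e2\<in>P)}" for u v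
        have "Q u v \<subseteq> ?SP u v \<and> Q u v \<noteq> {} \<and> Q u v = Q v u"
          if "u\<in>V" "v\<in>V" "u\<noteq>v" for u v
        proof -
          have "Q u v \<noteq> {}" using nsep[OF that] unfolding Q_def separates_def by auto
          moreover have "Q u v = Q v u" unfolding Q_def by (simp only: sp_sym[of V E u v])
          moreover have "Q u v \<subseteq> ?SP u v" unfolding Q_def by blast
          ultimately show ?thesis by (intro conjI)
        qed
        from fixing_exists[of V Q E, OF this] obtain F where
          F: "F \<in> path_fixings V E" "\<forall>u\<in>V. \<forall>v\<in>V. u\<noteq>v \<longrightarrow> F \<inter> ?SP u v \<subseteq> Q u v" by blast
        have "snd (col_graph F E (path_matrix F)) \<in> snd ` ?S" using F(1) by (intro imageI)
        with xin have "x \<in> snd (col_graph F E (path_matrix F))" by (rule InterD)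
        then have "x \<in> {{i,j}|i j. i\<in>E \<and> j\<in>E \<and> i\<noteq>j \<and> (\<exists>P\<in>F. i\<in>P \<and> j\<in>P)}"
          by (simp only: colsnd[OF F(1)])
        then obtain i j P where ijP: "x = {i,j}" "P \<in> F" "i \<in> P" "j \<in> P" by blast
        have "e1 \<in> {i,j}" "e2 \<in> {i,j}" using ijP(1) x(1) by blast+
        then have P: "P \<in> F" "e1 \<in> P" "e2 \<in> P" using ijP by blast+
        have "P \<in> all_shortest_paths V E" using F(1) P(1) unfolding path_fixings_def by blast
        then obtain u v where uv: "u\<in>V" "v\<in>V" "u\<noteq>v" "P \<in> ?SP u v"
          by (rule asp_cases)
        then have "P \<in> Q u v" using F(2) P(1) by blast
        then show False using P unfolding Q_def by auto
      qed
    qed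
  qed
  show ?thesis unfolding graph_Inter_def fstS sndS by (simp add: aux_graph_def)
qed

end
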